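(* Suppose Assumption (A3) of the context holds, and let $\{\sigma_k\},\{z_k\}$ be generated by Algorithm RiAL-RGD, with $\mathcal{L}_k(x)=f(x)+M_{h/\sigma_k}(\mathcal{A}(x)+z_k/\sigma_k)$ and $\Phi^*:=\inf_{x\in\mathcal{M}}\Phi(x)$. Then for every $x\in\mathcal{M}$ and $k\ge1$: $$\mathcal{L}_k(x)\ge\Phi^*-\frac{2L_h^2}{\sigma_1},\qquad \mathcal{L}_k(x)\le\Phi(x)+\frac{L_h^2}{\sigma_k},\qquad \mathcal{L}_{k+1}(x)\le\mathcal{L}_k(x)+\frac{2L_h^2}{\sigma_k}.$$
   Context: Setting. $\mathcal{E}_1,\mathcal{E}_2$ are finite-dimensional Euclidean spaces with inner product $\langle\cdot,\cdot\rangle$ and norm $\|\cdot\|$. $\mathcal{M}\subseteq\mathcal{E}_1$ is an embedded Riemannian submanifold with induced metric; $\mathrm{grad}\,g(x)=\mathrm{proj}_{\mathrm{T}_x\mathcal{M}}(\nabla g(x))$. A retraction $\mathrm{R}_x:\mathrm{T}_x\mathcal{M}\to\mathcal{M}$ (smooth, globally defined, $\mathrm{R}_x(0)=x$, $\frac{d}{dt}\mathrm{R}_x(tv)|_{t=0}=v$) is fixed. $f:\mathcal{E}_1\to\mathbb{R}$ is $C^1$, $\mathcal{A}:\mathcal{E}_1\to\mathcal{E}_2$ smooth with Jacobian $\nabla\mathcal{A}$, $h:\mathcal{E}_2\to\mathbb{R}$ convex; $\Phi(x)=f(x)+h(\mathcal{A}(x))$. For $\lambda>0$, $\mathrm{prox}_{\lambda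 h}(w)=\arg\min_u\{h(u)+\frac1{2\lambda}\|u-w\|^2\}$, $M_{\lambda h}(w)=\min_u\{h(u)+\frac1{2\lambda}\|u-w\|^2\}$. Algorithm RiAL-RGD: input $x_1\in\mathcal{M}$, $y_1=z_1=0$, $\varepsilon_1,\sigma_1>0$, $b>1$. For $k=1,2,\dots$: with $\mathcal{L}_k$ as in the claim, run $x_{k,1}=x_k$, $x_{k,t+1}=\mathrm{R}_{x_{k,t}}(-\zeta_{k,t}\mathrm{grad}\,\mathcal{L}_k(x_{k,t}))$ (stepsizes $\zeta_{k,t}>0$) until $\|\mathrm{grad}\,\mathcal{L}_k(x_{k,t_k})\|\le\varepsilon_k$; set $x_{k+1}=x_{k,t_k}$, $y_{k+1}=\mathrm{prox}_{h/\sigma_k}(\mathcal{A}(x_{k+1})+z_k/\sigma_k)$, $z_{k+1}=z_k+\sigma_k(\mathcal{A}(x_{k+1})-y_{k+1})$, $\sigma_{k+1}=b\sigma_k$, $\varepsilon_{k+1}=\varepsilon_k/b$. Assumption (A3): (i) $f(x')\le f(x)+\langle\nabla f(x),x'-x\rangle+\frac{L_f}{2}\|x'-x\|^2$ for all $x,x'\in\mathcal{M}$, and $|h(w)-h(w')|\le L_h\|w-w'\|$ for all $w,w'\in\mathcal{E}_2$; (ii) $\mathcal{A}$ is $L^0_{\mathcal{A}}$-Lipschitz and $\nabla\mathcal{A}$ is $L^1_{\mathcal{A}}$-Lipschitz on $\mathrm{conv}\,\mathcal{M}$; (iii) $\rho_{\mathcal{A}}:=\max_{x\in\mathrm{conv}\,\mathcal{M}}\|\nabla\mathcal{A}(x)\|<+\infty$.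 *)

theory Defs
  imports "HOL-Analysis.Analysis"
begin

text \<open>Tangent space of a subset M of a Euclidean space at x: velocities at 0 of
  differentiable curves lying in M (for an embedded submanifold this is T_x M).\<close>
definition tangent_space :: "'a::euclidean_space set \<Rightarrow> 'a \<Rightarrow> 'a set" where
  "tangent_space M x = {v. \<exists>\<gamma> e. e > 0 \<and> \<gamma> 0 = x \<and> \<gamma> ` {-e<..<e} \<subseteq> M \<and>
      (\<gamma> has_vector_derivative v) (at 0)}"

text \<open>Embedded (C^1) submanifold: locally the zero set of a C^1 submersion onto a
  fixed linear subspace W (local defining function).\<close>
definition embedded_submanifold :: "'a::euclidean_space set \<Rightarrow> bool" where
  "embedded_submanifold M \<longleftrightarrow>
    (\<forall>x\<in>M. \<exists>U (F :: 'a \<Rightarrow> 'a) DF W. open U \<and> x \<in> U \<and> subspace W \<and>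
       (\<forall>y\<in>U. (F has_derivative blinfun_apply (DF y)) (at y) \<and> F y \<in> W \<and>
               range (blinfun_apply (DF y)) = W) \<and>
       continuous_on U DF \<and> M \<inter> U = {y\<in>U. F y = 0})"

definition orth_proj :: "'a::euclidean_space set \<Rightarrow> 'a \<Rightarrow> 'a" where
  "orth_proj S v = (THE p. p \<in> S \<and> (\<forall>w\<in>S. inner (v - p) w = 0))"

definition egrad :: "('a::euclidean_space \<Rightarrow> real) \<Rightarrow> 'a \<Rightarrow> 'a" where
  "egrad g x = (THE gv. (g has_derivative (\<lambda>v. inner gv v)) (at x))"

definition rgrad :: "'a::euclidean_space set \<Rightarrow> ('a \<Rightarrow> real) \<Rightarrow> 'a \<Rightarrow> 'a" where
  "rgrad M g x = orth_proj (tangent_space M x) (egrad g x)"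

definition retraction :: "'a::euclidean_space set \<Rightarrow> ('a \<Rightarrow> 'a \<Rightarrow> 'a) \<Rightarrow> bool" where
  "retraction M R \<longleftrightarrow>
     (\<forall>x\<in>M. \<forall>v\<in>tangent_space M x. R x v \<in> M) \<and>
     (\<forall>x\<in>M. R x 0 = x) \<and>
     (\<forall>x\<in>M. \<forall>v\<in>tangent_space M x. ((\<lambda>t. R x (t *\<^sub>R v)) has_vector_derivative v) (at 0)) \<and>
     continuous_on {(x, v). x \<in> M \<and> v \<in> tangent_space M x} (\<lambda>(x, v). R x v)"

definition moreau :: "('b::euclidean_space \<Rightarrow> real) \<Rightarrow> real \<Rightarrow> 'b \<Rightarrow> real" where
  "moreau h lam w = Inf (range (\<lambda>u. h u + (norm (u - w))\<^sup>2 / (2 * lam)))"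

definition prox :: "('b::euclidean_space \<Rightarrow> real) \<Rightarrow> real \<Rightarrow> 'b \<Rightarrow> 'b" where
  "prox h lam w = (SOME u. \<forall>v. h u + (norm (u - w))\<^sup>2 / (2 * lam) \<le> h v + (norm (v - w))\<^sup>2 / (2 * lam))"

definition auglag :: "('a \<Rightarrow> real) \<Rightarrow> ('b::euclidean_space \<Rightarrow> real) \<Rightarrow> ('a \<Rightarrow> 'b) \<Rightarrow> real \<Rightarrow> 'b \<Rightarrow> 'a \<Rightarrow> real" where
  "auglag f h A s z x = f x + moreau h (1 / s) (A x + (1 / s) *\<^sub>R z)"

end

theory Submission
  imports Defs
begin

lemma Lh_nonneg:
  fixes h :: "'b::euclidean_space \<Rightarrow> real"
  assumes L: "\<forall>w w'. \<bar>h w - h w'\<bar> \<le> Lh * norm (w - w')"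
  shows "0 \<le> Lh"
proof -
  obtain e :: 'b where e: "e \<in> Basis" using nonempty_Basis by blast
  have "\<bar>h e - h 0\<bar> \<le> Lh * norm (e - 0)" using L by blast
  moreover have "norm (e - 0) = 1" using e by simp
  ultimately show ?thesis by simp
qed

lemma prox_exists:
  fixes h :: "'b::euclidean_space \<Rightarrow> real"
  assumes L: "\<forall>w w'. \<bar>h w - h w'\<bar> \<le> Lh * norm (w - w')" and lam: "lam > 0"
  shows "\<exists>u. \<forall>v. h u + (norm (u - w))\<^sup>2/(2*lam) \<le> h v + (norm (v - w))\<^sup>2/(2*lam)"
proof -
  let ?g = "\<lambda>u. h u + (norm (u - w))\<^sup>2/(2*lam)"
  have Lh0: "0 \<le> Lh" using Lh_nonneg[OF L] .
  have ch: "continuous_on UNIV h"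
    by (rule lipschitz_on_continuous_on[of Lh]) (auto simp: lipschitz_on_def dist_norm Lh0 L dist_real_def)
  define r where "r = 2*lam*Lh"
  have r0: "r \<ge> 0" using lam Lh0 by (simp add: r_def)
  have cg: "continuous_on (cball w r) ?g"
    by (intro continuous_intros continuous_on_subset[OF ch]) (use lam in auto)
  obtain u where u: "u \<in> cball w r" "\<forall>v\<in>cball w r. ?g u \<le> ?g v"
    using continuous_attains_inf[OF compact_cball _ cg] r0 by auto
  show ?thesis
  proof (intro exI allI)
    fix v
    show "?g u \<le> ?g v"
    proof (cases "v \<in> cball w r")
      case True then show ?thesis using u by blast
    next
      case False
      define t where "t = norm (v - w)"
      have t: "t > r" using False by (simp add: t_def dist_norm norm_minus_commute)
      have t0: "t \<ge> 0" using t r0 by linarith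
      have "t * (2*lam*Lh) \<le> t * t" using t t0 unfolding r_def by (intro mult_left_mono) auto
      hence "Lh * t \<le> t^2/(2*lam)" using lam by (simp add: field_simps power2_eq_square)
      moreover have "h w - Lh * t \<le> h v" using L[rule_format, of w v] by (simp add: t_def norm_minus_commute)
      ultimately have "?g w \<le> ?g v" by (simp add: t_def)
      moreover have "?g u \<le> ?g w" using u(2)[rule_format, of w] r0 by simp
      ultimately show ?thesis by linarith
    qed
  qed
qed

lemma prox_dist:
  fixes h :: "'b::euclidean_space \<Rightarrow> real"
  assumes L: "\<forall>w w'. \<bar>h w - h w'\<bar> \<le> Lh * norm (w - w')" and lam: "lam > 0"
    and y: "\<forall>v. h y + (norm (y - w))\<^sup>2/(2*lam) \<le> h v + (norm (v - w))\<^sup>2/(2*lam)"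
  shows "norm (w - y) \<le> lam * Lh"
proof (rule ccontr)
  assume "\<not> ?thesis"
  hence rl: "norm (w - y) > lam * Lh" by simp
  define r where "r = norm (w - y)"
  have Lh0: "0 \<le> Lh" using Lh_nonneg[OF L] .
  have r0: "r > 0" using rl lam Lh0 r_def by (smt (verit) mult_nonneg_nonneg)
  define c where "c = lam * Lh / r"
  have c0: "0 \<le> c" "c < 1" using lam Lh0 r0 rl by (auto simp: c_def r_def field_simps)
  have lc: "lam * Lh = c * r" using r0 by (simp add: c_def)
  define v where "v = y + (1 - c) *\<^sub>R (w - y)"
  have vw: "v - w = c *\<^sub>R (y - w)" by (simp add: v_def algebra_simps)
  have nvw: "norm (v - w) = c * r" using c0 by (simp add: vw r_def norm_minus_commute)
  have hv: "h v \<le> h y + Lh * ((1 - c) * r)"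
    using L[rule_format, of v y] c0 by (simp add: v_def r_def)
  have "h y + r^2/(2*lam) \<le> h v + (c*r)^2/(2*lam)"
    using y[rule_format, of v] by (simp add: nvw r_def norm_minus_commute)
  hence "r^2/(2*lam) \<le> Lh * ((1 - c) * r) + (c*r)^2/(2*lam)" using hv by linarith
  hence "r^2 \<le> 2 * (lam * Lh) * ((1 - c) * r) + (c*r)^2" using lam by (simp add: field_simps)
  hence "r^2 \<le> 2 * (c * r) * ((1 - c) * r) + (c*r)^2" by (simp add: lc)
  hence "r^2 * (1 - c)^2 \<le> 0" by (simp add: power2_eq_square algebra_simps)
  moreover have "r^2 * (1 - c)^2 > 0" using r0 c0 by simp
  ultimately show False by linarith
qed

lemma moreau_upper:
  fixes h :: "'b::euclidean_space \<Rightarrow> real"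
  assumes L: "\<forall>w w'. \<bar>h w - h w'\<bar> \<le> Lh * norm (w - w')" and lam: "lam > 0"
  shows "moreau h lam (a + lam *\<^sub>R z) \<le> h a + lam * (norm z)\<^sup>2 / 2"
proof -
  let ?w = "a + lam *\<^sub>R z"
  obtain u where u: "\<forall>v. h u + (norm (u - ?w))\<^sup>2/(2*lam) \<le> h v + (norm (v - ?w))\<^sup>2/(2*lam)"
    using prox_exists[OF L lam] by blast
  have bdd: "bdd_below (range (\<lambda>v. h v + (norm (v - ?w))\<^sup>2/(2*lam)))"
    using u by (intro bdd_belowI[where m="h u + (norm (u - ?w))\<^sup>2/(2*lam)"]) auto
  have "moreau h lam ?w \<le> h a + (norm (a - ?w))\<^sup>2/(2*lam)"
    unfolding moreau_def by (rule cINF_lower[OF bdd]) simp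
  also have "(norm (a - ?w))\<^sup>2/(2*lam) = lam * (norm z)\<^sup>2 / 2"
    using lam by (simp add: power2_eq_square field_simps)
  finally show ?thesis by simp
qed

lemma moreau_lower:
  fixes h :: "'b::euclidean_space \<Rightarrow> real"
  assumes L: "\<forall>w w'. \<bar>h w - h w'\<bar> \<le> Lh * norm (w - w')" and lam: "lam > 0"
    and zb: "norm z \<le> Lh"
  shows "h a - 3/2 * lam * Lh\<^sup>2 \<le> moreau h lam (a + lam *\<^sub>R z)"
  unfolding moreau_def
proof (rule cINF_greatest)
  show "UNIV \<noteq> {}" by simp
  fix u
  define d where "d = u - a"
  define t where "t = norm d"
  define q where "q = norm z"
  have "u - (a + lam *\<^sub>R z) = d - lam *\<^sub>R z" by (simp add: d_def)
  hence n2: "(norm (u - (a + lam *\<^sub>R z)))\<^sup>2 = t^2 - 2 * lam * inner d z + lam^2 * q^2"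
    unfolding t_def q_def power2_norm_eq_inner
    by (simp add: inner_diff_left inner_diff_right inner_commute algebra_simps power2_eq_square)
  have cs: "inner d z \<le> t * q" unfolding t_def q_def by (rule norm_cauchy_schwarz)
  have hu: "h a - Lh * t \<le> h u" using L[rule_format, of a u] by (simp add: t_def d_def norm_minus_commute)
  have t0: "t \<ge> 0" "q \<ge> 0" by (auto simp: t_def q_def)
  have s1: "0 \<le> (t - lam*(Lh+q))^2" by simp
  have s2: "0 \<le> lam^2 * (2*Lh*(Lh - q))" using zb t0 Lh_nonneg[OF L] by (intro mult_nonneg_nonneg) (auto simp: q_def)
  have key: "- 3 * lam^2 * Lh^2 \<le> t^2 - 2*lam*(Lh+q)*t + lam^2 * q^2"
  proof -
    have "t^2 - 2*lam*(Lh+q)*t + lam^2 * q^2 + 3 * lam^2 * Lh^2 = (t - lam*(Lh+q))^2 + lam^2 * (2*Lh*(Lh - q))"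
      by (simp add: power2_eq_square algebra_simps)
    thus ?thesis using s1 s2 by linarith
  qed
  have "lam * inner d z \<le> lam * (t * q)" using cs lam by (intro mult_left_mono) auto
  hence "t^2 - 2 * lam * inner d z + lam^2 * q^2 \<ge> t^2 - 2*lam*(q*t) + lam^2 * q^2"
    by (simp add: mult.commute)
  hence num: "- 3 * lam^2 * Lh^2 + 2*lam*Lh*t \<le> (norm (u - (a + lam *\<^sub>R z)))\<^sup>2"
    using key n2 by (simp add: algebra_simps)
  hence "(- 3 * lam^2 * Lh^2 + 2*lam*Lh*t) / (2*lam) \<le> (norm (u - (a + lam *\<^sub>R z)))\<^sup>2 / (2*lam)"
    using lam by (intro divide_right_mono) auto
  moreover have "(- 3 * lam^2 * Lh^2 + 2*lam*Lh*t) / (2*lam) = - 3/2 * lam * Lh^2 + Lh * t"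
    using lam by (simp add: field_simps power2_eq_square)
  ultimately show "h a - 3/2 * lam * Lh\<^sup>2 \<le> h u + (norm (u - (a + lam *\<^sub>R z)))\<^sup>2 / (2*lam)"
    using hu by linarith
qed

theorem lemma3:
  fixes M :: "'a::euclidean_space set"
    and R :: "'a \<Rightarrow> 'a \<Rightarrow> 'a"
    and f :: "'a \<Rightarrow> real" and gf :: "'a \<Rightarrow> 'a"
    and A :: "'a \<Rightarrow> 'b::euclidean_space" and DA :: "'a \<Rightarrow> 'a \<Rightarrow>\<^sub>L 'b"
    and h :: "'b \<Rightarrow> real"
    and Lf Lh LA0 LA1 b :: real
    and x :: "nat \<Rightarrow> 'a" and y z :: "nat \<Rightarrow> 'b"
    and \<sigma> \<epsilon> :: "nat \<Rightarrow> real"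
    and xin :: "nat \<Rightarrow> nat \<Rightarrow> 'a" and \<zeta> :: "nat \<Rightarrow> nat \<Rightarrow> real" and T :: "nat \<Rightarrow> nat"
  assumes manifold: "embedded_submanifold M"
    and retr: "retraction M R"
    and f_C1: "\<forall>u. (f has_derivative (\<lambda>v. inner (gf u) v)) (at u)" "continuous_on UNIV gf"
    and A_diff: "\<forall>u. (A has_derivative blinfun_apply (DA u)) (at u)" "continuous_on UNIV DA"
    and h_convex: "convex_on UNIV h"
    \<comment> \<open>Assumption (A3)\<close>
    and A3_f: "\<forall>u\<in>M. \<forall>u'\<in>M. f u' \<le> f u + inner (gf u) (u' - u) + Lf / 2 * (norm (u' - u))\<^sup>2"
    and A3_h: "\<forall>w w'. \<bar>h w - h w'\<bar> \<le> Lh * norm (w - w')"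
    and A3_A0: "\<forall>u\<in>convex hull M. \<forall>u'\<in>convex hull M. norm (A u - A u') \<le> LA0 * norm (u - u')"
    and A3_A1: "\<forall>u\<in>convex hull M. \<forall>u'\<in>convex hull M. norm (DA u - DA u') \<le> LA1 * norm (u - u')"
    and A3_rho: "bounded (DA ` (convex hull M))"
    \<comment> \<open>Algorithm RiAL-RGD\<close>
    and init: "x 1 \<in> M" "y 1 = 0" "z 1 = 0" "\<epsilon> 1 > 0" "\<sigma> 1 > 0" "b > 1"
    and inner_start: "\<forall>k\<ge>1. xin k 1 = x k"
    and inner_T: "\<forall>k\<ge>1. T k \<ge> 1"
    and inner_step: "\<forall>k\<ge>1. \<forall>t. 1 \<le> t \<and> t < T k \<longrightarrow> \<zeta> k t > 0 \<and>
        xin k (t + 1) = R (xin k t) (- \<zeta> k t *\<^sub>R rgrad M (auglag f h A (\<sigma> k) (z k)) (xin k t))"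
    and inner_continue: "\<forall>k\<ge>1. \<forall>t. 1 \<le> t \<and> t < T k \<longrightarrow>
        norm (rgrad M (auglag f h A (\<sigma> k) (z k)) (xin k t)) > \<epsilon> k"
    and inner_stop: "\<forall>k\<ge>1. norm (rgrad M (auglag f h A (\<sigma> k) (z k)) (xin k (T k))) \<le> \<epsilon> k"
    and x_upd: "\<forall>k\<ge>1. x (k + 1) = xin k (T k)"
    and y_upd: "\<forall>k\<ge>1. y (k + 1) = prox h (1 / \<sigma> k) (A (x (k + 1)) + (1 / \<sigma> k) *\<^sub>R z k)"
    and z_upd: "\<forall>k\<ge>1. z (k + 1) = z k + \<sigma> k *\<^sub>R (A (x (k + 1)) - y (k + 1))"
    and sigma_upd: "\<forall>k\<ge>1. \<sigma> (k + 1) = b * \<sigma> k"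
    and eps_upd: "\<forall>k\<ge>1. \<epsilon> (k + 1) = \<epsilon> k / b"
  shows "\<forall>u\<in>M. \<forall>k\<ge>1.
     ereal (auglag f h A (\<sigma> k) (z k) u) \<ge> (INF v\<in>M. ereal (f v + h (A v))) - ereal (2 * Lh\<^sup>2 / \<sigma> 1) \<and>
     auglag f h A (\<sigma> k) (z k) u \<le> f u + h (A u) + Lh\<^sup>2 / \<sigma> k \<and>
     auglag f h A (\<sigma> (k + 1)) (z (k + 1)) u \<le> auglag f h A (\<sigma> k) (z k) u + 2 * Lh\<^sup>2 / \<sigma> k"
proof -
  have Lh0: "0 \<le> Lh" using Lh_nonneg[OF A3_h] .
  have inv: "\<sigma> k > 0 \<and> \<sigma> 1 \<le> \<sigma> k \<and> norm (z k) \<le> Lh" if k1: "1 \<le> k" for k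
    using k1
  proof (induction k rule: dec_induct)
    case base
    then show ?case using init Lh0 by simp
  next
    case (step k)
    define s where "s = \<sigma> k"
    have s0: "s > 0" and s1: "\<sigma> 1 \<le> s" and zk: "norm (z k) \<le> Lh" using step.IH by (auto simp: s_def)
    have k1: "1 \<le> k" using step.hyps by simp
    have sk1: "\<sigma> (k+1) = b * s" using sigma_upd k1 by (simp add: s_def)
    have sb: "s \<le> b * s" using s0 init(6) by simp
    have bs0: "b * s > 0" using s0 init(6) by simp
    have A1: "\<sigma> (k+1) > 0 \<and> \<sigma> 1 \<le> \<sigma> (k+1)" unfolding sk1 using bs0 sb s1 by linarith
    define w where "w = A (x (k + 1)) + (1 / s) *\<^sub>R z k"
    define y' where "y' = prox h (1 / s) w"
    have lam: "1 / s > 0" using s0 by simp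
    have ymin: "\<forall>v. h y' + (norm (y' - w))\<^sup>2/(2*(1/s)) \<le> h v + (norm (v - w))\<^sup>2/(2*(1/s))"
      unfolding y'_def prox_def by (rule someI_ex[OF prox_exists[OF A3_h lam]])
    have nd: "norm (w - y') \<le> (1/s) * Lh" by (rule prox_dist[OF A3_h lam ymin])
    have "z (k+1) = z k + s *\<^sub>R (A (x (k + 1)) - y')"
      using z_upd y_upd k1 by (simp add: s_def y'_def w_def)
    also have "\<dots> = s *\<^sub>R (w - y')" using s0 by (simp add: w_def algebra_simps)
    finally have "norm (z (k+1)) = s * norm (w - y')" using s0 by simp
    also have "\<dots> \<le> s * ((1/s) * Lh)" using nd s0 by (intro mult_left_mono) auto
    also have "\<dots> = Lh" using s0 by simp
    finally show ?case using A1 by simp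
  qed
  show ?thesis
  proof (intro ballI allI impI)
    fix u k assume uM: "u \<in> M" and k1: "1 \<le> (k::nat)"
    have I: "\<sigma> k > 0" "\<sigma> 1 \<le> \<sigma> k" "norm (z k) \<le> Lh" using inv[OF k1] by auto
    have I': "\<sigma> (k+1) > 0" "norm (z (k+1)) \<le> Lh" using inv[of "k+1"] k1 by auto
    have sk1: "\<sigma> (k+1) = b * \<sigma> k" using sigma_upd k1 by simp
    define c where "c = Lh\<^sup>2 / \<sigma> k"
    have c0: "c \<ge> 0" using I by (simp add: c_def)
    have c1: "Lh\<^sup>2 / \<sigma> 1 \<ge> c" unfolding c_def using I init(5) by (intro divide_left_mono) auto
    have c2: "Lh\<^sup>2 / \<sigma> (k+1) \<le> c" unfolding c_def sk1 using I init(6)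
      by (intro divide_left_mono) (auto simp: mult_less_cancel_right1 less_imp_le)
    have zsq: "(norm (z k))\<^sup>2 \<le> Lh\<^sup>2" "(norm (z (k+1)))\<^sup>2 \<le> Lh\<^sup>2"
      using I(3) I'(2) by (auto intro: power_mono)
    have lo: "f u + h (A u) - 3/2 * c \<le> auglag f h A (\<sigma> k) (z k) u"
      using moreau_lower[OF A3_h _ I(3), of "1 / \<sigma> k" "A u"] I(1)
      by (simp add: auglag_def c_def)
    have up: "auglag f h A (\<sigma> k) (z k) u \<le> f u + h (A u) + (1 / \<sigma> k) * (norm (z k))\<^sup>2 / 2"
      using moreau_upper[OF A3_h, of "1 / \<sigma> k" "A u" "z k"] I(1)
      by (simp add: auglag_def)
    have "(1 / \<sigma> k) * (norm (z k))\<^sup>2 / 2 \<le> c / 2"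
      using zsq(1) I(1) by (simp add: c_def divide_right_mono)
    with up have up': "auglag f h A (\<sigma> k) (z k) u \<le> f u + h (A u) + c / 2" by linarith
    have up2: "auglag f h A (\<sigma> (k+1)) (z (k+1)) u \<le> f u + h (A u) + (1 / \<sigma> (k+1)) * (norm (z (k+1)))\<^sup>2 / 2"
      using moreau_upper[OF A3_h, of "1 / \<sigma> (k+1)" "A u" "z (k+1)"] I'(1)
      by (simp add: auglag_def)
    have "(1 / \<sigma> (k+1)) * (norm (z (k+1)))\<^sup>2 / 2 \<le> Lh\<^sup>2 / \<sigma> (k+1) / 2"
      using zsq(2) I'(1) by (simp add: divide_right_mono)
    moreover have "Lh\<^sup>2 / \<sigma> (k+1) / 2 \<le> c / 2" using c2 by simp
    ultimately have up2': "auglag f h A (\<sigma> (k+1)) (z (k+1)) u \<le> f u + h (A u) + c / 2" using up2 by linarith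
    have "(INF v\<in>M. ereal (f v + h (A v))) \<le> ereal (f u + h (A u))" by (rule INF_lower[OF uM])
    hence "(INF v\<in>M. ereal (f v + h (A v))) - ereal (2 * Lh\<^sup>2 / \<sigma> 1) \<le> ereal (f u + h (A u)) - ereal (2 * Lh\<^sup>2 / \<sigma> 1)"
      by (rule ereal_minus_mono) simp
    also have "\<dots> = ereal (f u + h (A u) - 2 * Lh\<^sup>2 / \<sigma> 1)" by simp
    also have "\<dots> \<le> ereal (auglag f h A (\<sigma> k) (z k) u)" using lo c1 c0 by simp
    finally have "ereal (auglag f h A (\<sigma> k) (z k) u) \<ge> (INF v\<in>M. ereal (f v + h (A v))) - ereal (2 * Lh\<^sup>2 / \<sigma> 1)" .
    then show "ereal (auglag f h A (\<sigma> k) (z k) u) \<ge> (INF v\<in>M. ereal (f v + h (A v))) - ereal (2 * Lh\<^sup>2 / \<sigma> 1) \<and>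
     auglag f h A (\<sigma> k) (z k) u \<le> f u + h (A u) + Lh\<^sup>2 / \<sigma> k \<and>
     auglag f h A (\<sigma> (k + 1)) (z (k + 1)) u \<le> auglag f h A (\<sigma> k) (z k) u + 2 * Lh\<^sup>2 / \<sigma> k"
    proof (intro conjI)
      have e1: "2 * Lh\<^sup>2 / \<sigma> k = 2 * c" "Lh\<^sup>2 / \<sigma> k = c" by (simp_all add: c_def)
      show "auglag f h A (\<sigma> k) (z k) u \<le> f u + h (A u) + Lh\<^sup>2 / \<sigma> k"
        using up' c0 e1 by linarith
      show "auglag f h A (\<sigma> (k + 1)) (z (k + 1)) u \<le> auglag f h A (\<sigma> k) (z k) u + 2 * Lh\<^sup>2 / \<sigma> k"
        using up2' lo e1 by linarith
    qed simp
  qed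
qed

end
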